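(* Let $X$ be a metric space, $\alpha\in\mathbb R$, and $\varphi\colon(0,\infty)\to[0,\infty)$ a function such that $\epsilon_{X;p}(S)\le\varphi(S)\,S^{\alpha/p}$ for all $p\in[1,\infty)$ and all $S>0$. Then for every $p\in[1,\infty)$ and every $S\ge e^p$, $$\epsilon_{X;p}(S)\le \frac{e^\alpha}{p}\,\varphi(S)\log S.$$
   Context: For a metric space $(X,d)$ and $1\le p<\infty$, $\ell^p(X)$ is the space of $p$-summable real functions on $X$ and $\ell^p_1(X)$ its unit sphere. For a map $\xi\colon X\to\ell^p(X)$, written $x\mapsto\xi_x$, put $S(\xi)=\sup\{d(x,y):\xi_x(y)\neq0\}$ and $\varepsilon(\xi;p)=\sup_{x\ne y}\|\xi_x-\xi_y\|_p/d(x,y)$. The profile is $\epsilon_{X;p}(S)=\inf\{\varepsilon(\xi;p):\xi\colon X\to\ell^p_1(X),\ S(\xi)\le S\}$. *)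

theory Defs
  imports "HOL-Analysis.Analysis" "HOL-Library.Extended_Real"
begin

text \<open>The metric space X is the type 'a (class metric_space), with d = dist.
  Elements of ell^p(X) are functions 'a \<Rightarrow> real whose p-th powers of absolute values are summable.\<close>

definition lp_space :: "real \<Rightarrow> ('a \<Rightarrow> real) set" where
  "lp_space p = {f. (\<lambda>y. \<bar>f y\<bar> powr p) summable_on UNIV}"

definition lp_norm :: "real \<Rightarrow> ('a \<Rightarrow> real) \<Rightarrow> real" where
  "lp_norm p f = (\<Sum>\<^sub>\<infinity>y. \<bar>f y\<bar> powr p) powr (1 / p)"

definition lp_sphere :: "real \<Rightarrow> ('a \<Rightarrow> real) set" where
  "lp_sphere p = {f \<in> lp_space p. lp_norm p f = 1}"

definition prop_radius :: "('a::metric_space \<Rightarrow> 'a \<Rightarrow> real) \<Rightarrow> ereal" where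
  "prop_radius \<xi> = Sup {ereal (dist x y) | x y. \<xi> x y \<noteq> 0}"

text \<open>epsilon(xi;p) = sup_{x \<noteq> y} ||xi_x - xi_y||_p / d(x,y) (in the extended reals;
  the value 0 is included so that the supremum over an empty index set is 0).\<close>
definition lip_const :: "('a::metric_space \<Rightarrow> 'a \<Rightarrow> real) \<Rightarrow> real \<Rightarrow> ereal" where
  "lip_const \<xi> p = Sup (insert 0 {ereal (lp_norm p (\<lambda>z. \<xi> x z - \<xi> y z) / dist x y) | x y. x \<noteq> y})"

text \<open>The profile epsilon_{X;p}(S) (infimum over an empty set is +infinity).\<close>
definition profile :: "'a::metric_space itself \<Rightarrow> real \<Rightarrow> real \<Rightarrow> ereal" where
  "profile X p S = Inf {lip_const \<xi> p | \<xi> :: 'a \<Rightarrow> 'a \<Rightarrow> real.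
       (\<forall>x. \<xi> x \<in> lp_sphere p) \<and> prop_radius \<xi> \<le> ereal S}"

end

theory Submission
  imports Defs
begin


lemma amgm:
  fixes x y th :: real
  assumes "0 \<le> x" "0 \<le> y" "0 \<le> th" "th \<le> 1"
  shows "x powr th * y powr (1 - th) \<le> th * x + (1 - th) * y"
proof (cases "x = 0 \<or> y = 0")
  case True then show ?thesis using assms by auto
next
  case False then show ?thesis using assms Youngs_inequality_0[of th "1-th" x y] by auto
qed

lemma convex_pt:
  fixes a b t q :: real
  assumes "0 \<le> b" "b \<le> a" "0 < t" "t < 1" "1 \<le> q"
  shows "(b + t*(a-b)) powr q \<le> (1-t) * b powr q + t * a powr q"
proof (cases "b = 0")
  case True
  have "(t*a) powr q = t powr q * a powr q" using assms by (simp add: powr_mult)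
  also have "\<dots> \<le> t * a powr q"
  proof (rule mult_right_mono)
    have "t powr q \<le> t powr 1" using assms by (intro powr_mono') auto
    then show "t powr q \<le> t" using assms by simp
  qed simp
  finally show ?thesis using True by (simp add: mult.commute)
next
  case False
  then have "b > 0" "a > 0" using assms by auto
  have eq: "b + t*(a-b) = (1-t) * b + t * a" by algebra
  show ?thesis unfolding eq
    using powr_convex[OF assms(5)] \<open>b>0\<close> \<open>a>0\<close> assms
    by (auto simp: convex_on_def)
qed




lemma keyN:
  fixes a b r q :: real
  assumes "0 \<le> b" "b \<le> a" "1 \<le> r" "r \<le> q"
  shows "a powr r - b powr r \<le> r * (a - b) * ((a powr q + b powr q)/2) powr ((r-1)/q)"
proof (cases "a = 0")
  case True then show ?thesis using assms by auto
next
  case False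
  then have a0: "a > 0" using assms by auto
  define K where "K = (a powr q + b powr q)/2"
  define th where "th = (r-1)/q"
  have q0: "q > 0" "q \<ge> 1" using assms by auto
  have K0: "K > 0" unfolding K_def using a0 assms by (simp add: add_pos_nonneg)
  have th0: "0 \<le> th" "th \<le> 1" unfolding th_def using assms by (auto simp: field_simps)
  define c where "c t = b + t*(a-b)" for t
  define G where "G t = K powr th * (th / K * (b powr q * (t - t^2/2) + a powr q * t^2/2) + (1-th) * t)" for t
  define g where "g t = K powr th * (th / K * ((1-t) * b powr q + t * a powr q) + (1-th))" for t
  define h where "h t = r * (a-b) * G t - c t powr r" for t
  have "h 0 \<le> h 1"
  proof (rule DERIV_nonneg_imp_increasing_open[of 0 1 h])
    fix t :: real assume t: "0 < t" "t < 1"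
    have ct: "c t > 0" unfolding c_def using t a0 assms
      by (smt (verit) mult_nonneg_nonneg mult_pos_pos)
    have dG: "(G has_real_derivative g t) (at t)" unfolding G_def g_def
      by (rule derivative_eq_intros refl | simp)+
    have dc: "((\<lambda>t. c t powr r) has_real_derivative r * c t powr (r-1) * (a-b)) (at t)"
    proof -
      have "(c has_real_derivative (a-b)) (at t)" unfolding c_def
        by (rule derivative_eq_intros refl | simp)+
      from DERIV_fun_powr[OF this ct, of r] show ?thesis by simp
    qed
    have dh: "(h has_real_derivative r*(a-b)*g t - r * c t powr (r-1) * (a-b)) (at t)"
      using DERIV_diff[OF DERIV_cmult[OF dG, of "r*(a-b)"] dc] unfolding h_def by simp
    have L: "c t powr q \<le> (1-t) * b powr q + t * a powr q"
      unfolding c_def using convex_pt[of b a t q] assms t q0 by auto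
    have "(c t powr q / K) powr th * 1 powr (1-th) \<le> th * (c t powr q / K) + (1-th) * 1"
      using amgm[of "c t powr q / K" 1 th] K0 th0 by auto
    moreover have "(c t powr q / K) powr th = c t powr (r-1) / K powr th"
      using ct K0 q0 by (simp add: powr_divide powr_powr th_def)
    ultimately have "c t powr (r-1) / K powr th \<le> th * (c t powr q / K) + (1-th)" by simp
    also have "\<dots> \<le> th * (((1-t) * b powr q + t * a powr q) / K) + (1-th)"
      using L K0 th0 by (intro add_right_mono mult_left_mono divide_right_mono) auto
    finally have "c t powr (r-1) \<le> g t" unfolding g_def using K0
      by (simp add: divide_le_eq mult.commute mult.left_commute)
    then have "0 \<le> r*(a-b)*g t - r * c t powr (r-1) * (a-b)"
    proof -
      have "0 \<le> (r*(a-b)) * (g t - c t powr (r-1))"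
        using \<open>c t powr (r-1) \<le> g t\<close> assms by (intro mult_nonneg_nonneg) auto
      then show ?thesis by (simp add: algebra_simps)
    qed
    then show "\<exists>y. (h has_real_derivative y) (at t) \<and> 0 \<le> y" using dh by blast
  next
    show "continuous_on {0..1} h" unfolding h_def G_def c_def
    proof (intro continuous_on_diff continuous_on_powr')
      show "\<forall>x\<in>{0..1}. 0 \<le> b + x * (a - b) \<and> (b + x * (a - b) = 0 \<longrightarrow> 0 < r)"
        using assms by auto
    qed (intro continuous_intros | simp)+
  qed simp
  moreover have "G 0 = 0" unfolding G_def by simp
  moreover have "G 1 = K powr th" unfolding G_def using K0 by (simp add: K_def field_simps)
  ultimately show ?thesis unfolding h_def c_def K_def[symmetric] th_def[symmetric]
    by simp
qed




definition mz :: "real \<Rightarrow> real \<Rightarrow> real" where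
  "mz r t = sgn t * \<bar>t\<bar> powr r"

lemma keyP_ord:
  fixes a b r q :: real
  assumes "b \<le> a" "1 \<le> r" "r \<le> q"
  shows "\<bar>mz r a - mz r b\<bar> \<le> r * \<bar>a - b\<bar> * ((\<bar>a\<bar> powr q + \<bar>b\<bar> powr q)/2) powr ((r-1)/q)"
proof -
  define K where "K = (\<bar>a\<bar> powr q + \<bar>b\<bar> powr q)/2"
  define th where "th = (r-1)/q"
  have th0: "0 \<le> th" unfolding th_def using assms by auto
  show ?thesis
  proof (cases "0 \<le> b")
    case True
    then have "mz r a = a powr r" "mz r b = b powr r" using assms unfolding mz_def
      by (auto simp: sgn_if)
    moreover have "b powr r \<le> a powr r" using True assms by (intro powr_mono2) auto
    moreover have "a powr r - b powr r \<le> r * (a - b) * ((a powr q + b powr q)/2) powr ((r-1)/q)"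
      using keyN[of b a r q] True assms by auto
    ultimately show ?thesis using True assms by auto
  next
    case False
    show ?thesis
    proof (cases "a \<le> 0")
      case True
      then have "mz r a = - ((-a) powr r)" "mz r b = - ((-b) powr r)" using assms False unfolding mz_def
        by (auto simp: sgn_if)
      moreover have "(-a) powr r \<le> (-b) powr r" using True assms by (intro powr_mono2) auto
      moreover have "(-b) powr r - (-a) powr r \<le> r * ((-b) - (-a)) * (((-b) powr q + (-a) powr q)/2) powr ((r-1)/q)"
        using keyN[of "-a" "-b" r q] True assms by auto
      ultimately show ?thesis using True False assms by (auto simp: add.commute)
    next
      case False2: False
      then have "mz r a = a powr r" "mz r b = - ((-b) powr r)" using assms False unfolding mz_def
        by (auto simp: sgn_if)
      have K1: "a powr r \<le> r * a * K powr th"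
      proof -
        have "a powr r \<le> r * (a - 0) * ((a powr q + 0 powr q)/2) powr th"
          using keyN[of 0 a r q] False2 assms unfolding th_def by auto
        also have "\<dots> \<le> r * a * K powr th"
        proof -
          have "(a powr q + 0 powr q)/2 \<le> K" unfolding K_def using False2 by simp
          then have "((a powr q + 0 powr q)/2) powr th \<le> K powr th" using th0 by (intro powr_mono2) auto
          then show ?thesis using False2 assms by (simp add: mult_left_mono)
        qed
        finally show ?thesis .
      qed
      have K2: "(-b) powr r \<le> r * (-b) * K powr th"
      proof -
        have "(-b) powr r \<le> r * (-b - 0) * (((-b) powr q + 0 powr q)/2) powr th"
          using keyN[of 0 "-b" r q] False assms unfolding th_def by auto
        also have "\<dots> \<le> r * (-b) * K powr th"
        proof -
          have "((-b) powr q + 0 powr q)/2 \<le> K" unfolding K_def using False by simp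
          then have "(((-b) powr q + 0 powr q)/2) powr th \<le> K powr th" using th0 by (intro powr_mono2) auto
          then show ?thesis using False assms by (simp add: mult_left_mono)
        qed
        finally show ?thesis .
      qed
      have "\<bar>mz r a - mz r b\<bar> = a powr r + (-b) powr r"
        using \<open>mz r a = _\<close> \<open>mz r b = _\<close> by simp
      also have "\<dots> \<le> r * (a - b) * K powr th" using K1 K2 by (simp add: algebra_simps)
      finally show ?thesis using assms unfolding K_def th_def by simp
    qed
  qed
qed

lemma keyP:
  fixes a b r q :: real
  assumes "1 \<le> r" "r \<le> q"
  shows "\<bar>mz r a - mz r b\<bar> \<le> r * \<bar>a - b\<bar> * ((\<bar>a\<bar> powr q + \<bar>b\<bar> powr q)/2) powr ((r-1)/q)"
proof (cases "b \<le> a")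
  case True then show ?thesis using keyP_ord assms by blast
next
  case False
  then have "\<bar>mz r b - mz r a\<bar> \<le> r * \<bar>b - a\<bar> * ((\<bar>b\<bar> powr q + \<bar>a\<bar> powr q)/2) powr ((r-1)/q)"
    using keyP_ord assms by auto
  then show ?thesis by (simp add: abs_minus_commute add.commute)
qed




lemma sphere_sum:
  assumes "f \<in> lp_sphere q" "q > 0"
  shows "(\<lambda>y. \<bar>f y\<bar> powr q) summable_on UNIV" "(\<Sum>\<^sub>\<infinity>y. \<bar>f y\<bar> powr q) = 1"
proof -
  show s: "(\<lambda>y. \<bar>f y\<bar> powr q) summable_on UNIV" using assms by (simp add: lp_sphere_def lp_space_def)
  have n: "(\<Sum>\<^sub>\<infinity>y. \<bar>f y\<bar> powr q) powr (1/q) = 1" using assms by (simp add: lp_sphere_def lp_norm_def)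
  have "0 \<le> (\<Sum>\<^sub>\<infinity>y. \<bar>f y\<bar> powr q)" by (intro infsum_nonneg) auto
  then have "(\<Sum>\<^sub>\<infinity>y. \<bar>f y\<bar> powr q) = ((\<Sum>\<^sub>\<infinity>y. \<bar>f y\<bar> powr q) powr (1/q)) powr q"
    using assms by (simp add: powr_powr)
  then show "(\<Sum>\<^sub>\<infinity>y. \<bar>f y\<bar> powr q) = 1" using n by simp
qed

lemma abs_mz_powr:
  assumes "p > 0"
  shows "\<bar>mz (q/p) a\<bar> powr p = \<bar>a\<bar> powr q"
  using assms by (cases "a = 0") (auto simp: mz_def abs_mult powr_powr)

lemma mz_sphere:
  assumes "f \<in> lp_sphere q" "1 \<le> p" "p \<le> q"
  shows "(\<lambda>y. mz (q/p) (f y)) \<in> lp_sphere p"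
proof -
  have p0: "p > 0" using assms by auto
  have e: "(\<lambda>y. \<bar>mz (q/p) (f y)\<bar> powr p) = (\<lambda>y. \<bar>f y\<bar> powr q)"
    using abs_mz_powr[OF p0] by auto
  have q0: "q > 0" using assms by auto
  show ?thesis using sphere_sum[OF assms(1) q0]
    unfolding lp_sphere_def lp_space_def lp_norm_def by (simp add: e)
qed

lemma diff_powr_bound:
  fixes a b q :: real
  assumes "q > 0"
  shows "\<bar>a - b\<bar> powr q \<le> 2 powr q * (\<bar>a\<bar> powr q + \<bar>b\<bar> powr q)"
proof -
  have "\<bar>a - b\<bar> \<le> 2 * max \<bar>a\<bar> \<bar>b\<bar>" by auto
  then have "\<bar>a - b\<bar> powr q \<le> (2 * max \<bar>a\<bar> \<bar>b\<bar>) powr q" using assms by (intro powr_mono2) auto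
  also have "\<dots> = 2 powr q * (max \<bar>a\<bar> \<bar>b\<bar>) powr q" by (simp add: powr_mult)
  also have "\<dots> \<le> 2 powr q * (\<bar>a\<bar> powr q + \<bar>b\<bar> powr q)"
    by (intro mult_left_mono) (auto simp: max_def)
  finally show ?thesis .
qed




lemma mazur_norm:
  assumes f: "f \<in> lp_sphere q" and g: "g \<in> lp_sphere q" and p1: "1 \<le> p" and pq: "p \<le> q"
  shows "lp_norm p (\<lambda>z. mz (q/p) (f z) - mz (q/p) (g z)) \<le> (q/p) * lp_norm q (\<lambda>z. f z - g z)"
proof -
  define r where "r = q/p"
  have p0: "p > 0" and q0: "q > 0" using p1 pq by auto
  have r1: "1 \<le> r" unfolding r_def using pq p0 by simp
  have "q/p \<le> q/1" using p1 q0 by (intro divide_left_mono) auto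
  then have rq: "r \<le> q" unfolding r_def by simp
  define F where "F y = \<bar>f y\<bar> powr q" for y
  define G where "G y = \<bar>g y\<bar> powr q" for y
  have Fs: "F summable_on UNIV" "infsum F UNIV = 1" using sphere_sum[OF f q0] unfolding F_def by auto
  have Gs: "G summable_on UNIV" "infsum G UNIV = 1" using sphere_sum[OF g q0] unfolding G_def by auto
  define A where "A y = \<bar>f y - g y\<bar> powr q" for y
  define K where "K y = (F y + G y)/2" for y
  have A0: "A y \<ge> 0" for y unfolding A_def by simp
  have K0: "K y \<ge> 0" for y unfolding K_def F_def G_def by simp
  have As: "A summable_on UNIV"
  proof (rule summable_on_comparison_test)
    show "(\<lambda>y. 2 powr q * (F y + G y)) summable_on UNIV"
      by (intro summable_on_cmult_right summable_on_add Fs Gs)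
    show "A y \<le> 2 powr q * (F y + G y)" for y unfolding A_def F_def G_def
      using diff_powr_bound[OF q0] by blast
  qed (simp add: A0)
  have Ks: "K summable_on UNIV" unfolding K_def
    using summable_on_cmult_left[OF summable_on_add[OF Fs(1) Gs(1)], of "1/2"] by simp
  have Ksum: "infsum K UNIV = 1"
  proof -
    have "infsum K UNIV = infsum (\<lambda>y. (1/2) * (F y + G y)) UNIV" unfolding K_def by simp
    also have "\<dots> = (1/2) * infsum (\<lambda>y. F y + G y) UNIV"
      by (rule infsum_cmult_right) (intro summable_on_add Fs Gs)
    also have "\<dots> = 1" using infsum_add[OF Fs(1) Gs(1)] Fs Gs by simp
    finally show ?thesis .
  qed
  define t where "t = infsum A UNIV"
  have t0: "t \<ge> 0" unfolding t_def by (intro infsum_nonneg A0)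
  have normq: "lp_norm q (\<lambda>z. f z - g z) = t powr (1/q)" unfolding lp_norm_def t_def A_def by simp
  define D where "D y = \<bar>mz r (f y) - mz r (g y)\<bar> powr p" for y
  have D0: "D y \<ge> 0" for y unfolding D_def by simp
  have normp: "lp_norm p (\<lambda>z. mz (q/p) (f z) - mz (q/p) (g z)) = infsum D UNIV powr (1/p)"
    unfolding lp_norm_def D_def r_def by simp
  have Dle: "D y \<le> r powr p * (A y powr (p/q) * K y powr (1 - p/q))" for y
  proof -
    have "\<bar>mz r (f y) - mz r (g y)\<bar> \<le> r * \<bar>f y - g y\<bar> * K y powr ((r-1)/q)"
      using keyP[OF r1 rq, of "f y" "g y"] unfolding K_def F_def G_def by simp
    then have "D y \<le> (r * \<bar>f y - g y\<bar> * K y powr ((r-1)/q)) powr p"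
      unfolding D_def using p0 by (intro powr_mono2) auto
    also have "\<dots> = r powr p * \<bar>f y - g y\<bar> powr p * (K y powr ((r-1)/q)) powr p"
      using r1 K0 by (simp add: powr_mult)
    also have "\<bar>f y - g y\<bar> powr p = A y powr (p/q)" unfolding A_def using q0 by (simp add: powr_powr)
    also have "(K y powr ((r-1)/q)) powr p = K y powr (1 - p/q)"
    proof -
      have "(q/p - 1)/q * p = 1 - p/q" using p0 q0 by (simp add: field_simps)
      then show ?thesis unfolding r_def by (simp add: powr_powr)
    qed
    finally show ?thesis by (simp add: mult.assoc)
  qed
  show ?thesis
  proof (cases "t = 0")
    case True
    have "A y = 0" for y using nonneg_infsum_le_0D[of A UNIV y] True As A0 unfolding t_def by auto
    then have "f y = g y" for y unfolding A_def using q0 by simp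
    then have "lp_norm p (\<lambda>z. mz (q/p) (f z) - mz (q/p) (g z)) = 0" unfolding lp_norm_def by simp
    then show ?thesis using normq True by simp
  next
    case False
    then have tp: "t > 0" using t0 by simp
    define c1 where "c1 = r powr p * t powr (p/q) * (p/q) / t"
    define c2 where "c2 = r powr p * t powr (p/q) * (1 - p/q)"
    define E where "E y = c1 * A y + c2 * K y" for y
    have DE: "D y \<le> E y" for y
    proof -
      have "A y powr (p/q) * K y powr (1 - p/q) = t powr (p/q) * ((A y / t) powr (p/q) * K y powr (1 - p/q))"
        using tp A0 by (simp add: powr_divide)
      also have "\<dots> \<le> t powr (p/q) * ((p/q) * (A y / t) + (1 - p/q) * K y)"
        using amgm[of "A y / t" "K y" "p/q"] tp A0 K0 p0 q0 pq
        by (intro mult_left_mono) auto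
      finally have "D y \<le> r powr p * (t powr (p/q) * ((p/q) * (A y / t) + (1 - p/q) * K y))"
        using Dle[of y] by (smt (verit) mult_left_mono powr_ge_zero)
      then show ?thesis unfolding E_def c1_def c2_def by (simp add: algebra_simps)
    qed
    have Es: "E summable_on UNIV" unfolding E_def
      by (intro summable_on_add summable_on_cmult_right As Ks)
    have Esum: "infsum E UNIV = r powr p * t powr (p/q)"
    proof -
      have "infsum E UNIV = c1 * t + c2 * 1" unfolding E_def t_def
        by (simp add: infsum_add summable_on_cmult_right As Ks infsum_cmult_right Ksum)
      also have "\<dots> = r powr p * t powr (p/q)"
      proof -
        have "c1 * t = r powr p * t powr (p/q) * (p/q)" unfolding c1_def using tp by simp
        then show ?thesis unfolding c2_def by (simp add: algebra_simps)
      qed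
      finally show ?thesis .
    qed
    have Ds: "D summable_on UNIV" using summable_on_comparison_test[OF Es DE D0] .
    have "infsum D UNIV \<le> r powr p * t powr (p/q)" using infsum_mono[OF Ds Es DE] Esum by simp
    then have "infsum D UNIV powr (1/p) \<le> (r powr p * t powr (p/q)) powr (1/p)"
      using p0 by (intro powr_mono2) (auto intro: infsum_nonneg D0)
    also have "\<dots> = r * t powr (1/q)"
      using p0 q0 r1 tp by (simp add: powr_mult powr_powr)
    finally show ?thesis using normp normq unfolding r_def by simp
  qed
qed




lemma mz_nz: "r > 0 \<Longrightarrow> (mz r a \<noteq> 0) = (a \<noteq> 0)"
  by (auto simp: mz_def sgn_if)

lemma lip_compare:
  fixes \<xi> \<eta> :: "'a::metric_space \<Rightarrow> 'a \<Rightarrow> real"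
  assumes r0: "r > 0"
    and pw: "\<And>x y. lp_norm p (\<lambda>z. \<eta> x z - \<eta> y z) \<le> r * lp_norm q (\<lambda>z. \<xi> x z - \<xi> y z)"
  shows "lip_const \<eta> p \<le> ereal r * lip_const \<xi> q"
  unfolding lip_const_def
proof (rule Sup_least)
  define L where "L = Sup (insert 0 {ereal (lp_norm q (\<lambda>z. \<xi> x z - \<xi> y z) / dist x y) |x y. x \<noteq> y})"
  have L0: "0 \<le> L" unfolding L_def by (rule Sup_upper) simp
  fix e assume "e \<in> insert 0 {ereal (lp_norm p (\<lambda>z. \<eta> x z - \<eta> y z) / dist x y) |x y. x \<noteq> y}"
  then consider "e = 0" | x y where "x \<noteq> y" "e = ereal (lp_norm p (\<lambda>z. \<eta> x z - \<eta> y z) / dist x y)"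
    by blast
  then show "e \<le> ereal r * L"
  proof cases
    case 1 then show ?thesis using L0 r0 by simp
  next
    case 2
    have d: "dist x y > 0" using 2 by simp
    have "e \<le> ereal (r * (lp_norm q (\<lambda>z. \<xi> x z - \<xi> y z) / dist x y))"
      unfolding 2 using pw[of x y] d by (simp add: divide_right_mono)
    also have "\<dots> = ereal r * ereal (lp_norm q (\<lambda>z. \<xi> x z - \<xi> y z) / dist x y)" by simp
    also have "\<dots> \<le> ereal r * L"
      using r0 2 unfolding L_def by (intro ereal_mult_left_mono Sup_upper) auto
    finally show ?thesis .
  qed
qed

lemma profile_compare_elem:
  fixes \<xi> :: "'a::metric_space \<Rightarrow> 'a \<Rightarrow> real"
  assumes p1: "1 \<le> p" and pq: "p \<le> q" and sph: "\<And>x. \<xi> x \<in> lp_sphere q"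
    and rad: "prop_radius \<xi> \<le> ereal S"
  shows "profile TYPE('a) p S \<le> ereal (q/p) * lip_const \<xi> q"
proof -
  define \<eta> where "\<eta> x z = mz (q/p) (\<xi> x z)" for x z
  have r0: "q/p > 0" using p1 pq by auto
  have "\<eta> x \<in> lp_sphere p" for x unfolding \<eta>_def using mz_sphere[OF sph p1 pq] .
  moreover have "prop_radius \<eta> = prop_radius \<xi>" unfolding prop_radius_def \<eta>_def
    using mz_nz[OF r0] by simp
  ultimately have "profile TYPE('a) p S \<le> lip_const \<eta> p" unfolding profile_def
    using rad by (intro Inf_lower) (auto intro!: exI[of _ \<eta>])
  also have "\<dots> \<le> ereal (q/p) * lip_const \<xi> q"
    unfolding \<eta>_def by (rule lip_compare[OF r0 mazur_norm[OF sph sph p1 pq]])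
  finally show ?thesis .
qed

lemma profile_compare:
  assumes p1: "1 \<le> p" and pq: "p \<le> q" and hq: "profile TYPE('a::metric_space) q S \<le> ereal D"
  shows "profile TYPE('a) p S \<le> ereal (q/p * D)"
proof -
  define P where "P = profile TYPE('a) p S"
  have r0: "q/p > 0" using p1 pq by auto
  have "ereal (p/q) * P \<le> profile TYPE('a) q S" unfolding profile_def
  proof (rule Inf_greatest)
    fix L assume "L \<in> {lip_const \<xi> q |\<xi>::'a \<Rightarrow> 'a \<Rightarrow> real. (\<forall>x. \<xi> x \<in> lp_sphere q) \<and> prop_radius \<xi> \<le> ereal S}"
    then obtain \<xi> :: "'a \<Rightarrow> 'a \<Rightarrow> real" where "L = lip_const \<xi> q" "\<forall>x. \<xi> x \<in> lp_sphere q" "prop_radius \<xi> \<le> ereal S"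
      by blast
    then have "P \<le> ereal (q/p) * L" unfolding P_def using profile_compare_elem[OF p1 pq] by blast
    then have "ereal (p/q) * P \<le> ereal (p/q) * (ereal (q/p) * L)"
      using p1 pq by (intro ereal_mult_left_mono) auto
    also have "\<dots> = (ereal (p/q) * ereal (q/p)) * L" by (rule mult.assoc[symmetric])
    also have "ereal (p/q) * ereal (q/p) = 1" using p1 pq by (simp add: one_ereal_def)
    also have "1 * L = L" by simp
    finally show "ereal (p/q) * P \<le> L" .
  qed
  also note hq
  finally have h: "ereal (p/q) * P \<le> ereal D" .
  show ?thesis
  proof (cases P)
    case (real x)
    then have "p/q * x \<le> D" using h by simp
    then have "x \<le> q/p * D" using p1 pq by (simp add: field_simps)
    then show ?thesis using real P_def by simp
  next
    case PInf
    have "0 < p/q" using p1 pq by simp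
    then have eq: "ereal (p/q) * P = \<infinity>" using PInf p1 pq by simp
    from h have "\<infinity> \<le> ereal D" unfolding eq .
    then show ?thesis by simp
  next
    case MInf
    then show ?thesis using P_def by simp
  qed
qed



theorem lemma2p3p2:
  fixes \<alpha> :: real and \<phi> :: "real \<Rightarrow> real"
  assumes phi_nonneg: "\<And>S. S > 0 \<Longrightarrow> \<phi> S \<ge> 0"
    and hyp: "\<And>p S. 1 \<le> p \<Longrightarrow> S > 0 \<Longrightarrow>
       profile TYPE('a::metric_space) p S \<le> ereal (\<phi> S * S powr (\<alpha> / p))"
  shows "\<And>p S. 1 \<le> p \<Longrightarrow> exp p \<le> S \<Longrightarrow>
       profile TYPE('a) p S \<le> ereal (exp \<alpha> / p * \<phi> S * ln S)"
proof -
  fix p S :: real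
  assume p1: "1 \<le> p" and pS: "exp p \<le> S"
  have S0: "S > 0" using pS by (smt (verit) exp_gt_zero)
  define q where "q = ln S"
  have pq: "p \<le> q" unfolding q_def using pS S0 by (simp add: ln_ge_iff)
  have q1: "1 \<le> q" using p1 pq by simp
  have "S \<noteq> 1" using q1 unfolding q_def by auto
  then have "S powr (\<alpha> / q) = exp \<alpha>" unfolding powr_def q_def using S0 q1 q_def by simp
  then have hq: "profile TYPE('a) q S \<le> ereal (\<phi> S * exp \<alpha>)" using hyp[OF q1 S0] by simp
  have "profile TYPE('a) p S \<le> ereal (q/p * (\<phi> S * exp \<alpha>))"
    by (rule profile_compare[OF p1 pq hq])
  also have "q/p * (\<phi> S * exp \<alpha>) = exp \<alpha> / p * \<phi> S * ln S" unfolding q_def by simp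
  finally show "profile TYPE('a) p S \<le> ereal (exp \<alpha> / p * \<phi> S * ln S)" .
qed

end
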